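(* Let $g\colon\mathbb X\to\mathbb Y$ be continuous, let $D\subset\mathbb Y$ be nonempty and closed, and let $\Phi\colon\mathbb X\rightrightarrows\mathbb Y$ be given by $\Phi(x):=g(x)-D$ for all $x\in\mathbb X$. Fix $(x,y)\in\operatorname{gph}\Phi$. Then: (i) For each $y^*\in\mathbb Y$, \[\widehat D^*\Phi(x,y)(y^* )\subset\begin{cases}\widehat D^*g(x)(y^* )& \text{if } y^*\in\widehat{\mathcal N}_D(g(x)-y),\\ \varnothing&\text{otherwise},\end{cases}\] and the opposite inclusion holds if $g$ is calm at $x$. (ii) For each $y^*\in\mathbb Y$, \[D^*\Phi(x,y)(y^* )\subset\begin{cases}D^*g(x)(y^* )& \text{if } y^*\in\mathcal N_D(g(x)-y),\\ \varnothing&\text{otherwise}.\end{cases}\] (iii) If $g$ is calm at $x$, then for each pair of directions $(u,v)\in\mathbb X\times\mathbb Y$ and each $y^*\in\mathbb Y$, $D^*\Phi((x,y);(u,v))(y^* )$ is contained in the union, over all $w\in Dg(x)(u)$ with $y^*\in\mathcal N_D(g(x)-y;w-v)$, of the sets $D^*g(x;(u,w))(y^* )$ (and is empty if no such $w$ exists).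
   Context: $\mathbb X,\mathbb Y$ are Euclidean spaces. For a closed set $Q$ and $\bar z\in Q$, $\widehat{\mathcal N}_Q(\bar z)=\{\eta\mid \langle\eta,z-\bar z\rangle\le o(\|z-\bar z\|)\ \forall z\in Q\}$ is the regular normal cone, $\mathcal N_Q(\bar z)$ the limiting normal cone (limits of $\eta_k\in\widehat{\mathcal N}_Q(z_k)$ with $Q\ni z_k\to\bar z$); both are empty for $\bar z\notin Q$. For a direction $w$, the directional limiting normal cone $\mathcal N_Q(\bar z;w)$ is the set of all $\eta$ for which there exist $w_k\to w$, $t_k\searrow0$, $\eta_k\to\eta$ with $\eta_k\in\widehat{\mathcal N}_Q(\bar z+t_kw_k)$ for all $k$. For a set-valued map $\Psi$ with closed graph and $(\bar x,\bar y)\in\operatorname{gph}\Psi$: $\widehat D^*\Psi(\bar x,\bar y)(y^* )=\{x^*\mid(x^*,-y^* )\in\widehat{\mathcal N}_{\operatorname{gph}\Psi}(\bar x,\bar y)\}$ (regular coderivative), $D^*\Psi(\bar x,\bar y)(y^* )=\{x^*\mid(x^*,-y^* )\in\mathcal N_{\operatorname{gph}\Psi}(\bar x,\bar y)\}$ (limiting coderivative), and $D^*\Psi((\bar x,\bar y);(u,v))(y^* )=\{x^*\mid(x^*,-y^* )\in\mathcal N_{\operatorname{gph}\Psi}((\bar x,\bar y);(u,v))\}$ (directional limiting coderivative). For single-valued $g$ one writes $\widehat D^*g(x)$, $D^*g(x)$, $D^*g(x;(u,w))$. The graphical derivative $Dg(x)(u)$ is the set of $w$ with $(u,w)$ in the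 (Bouligand) tangent cone to $\operatorname{gph}g$ at $(x,g(x))$. $g$ is calm at $x$ if there are a neighbourhood $U$ of $x$ and $L>0$ with $\|g(x')-g(x)\|\le L\|x'-x\|$ for all $x'\in U$. *)

theory Defs
  imports "HOL-Analysis.Analysis"
begin

definition reg_normal :: "'a::euclidean_space set \<Rightarrow> 'a \<Rightarrow> 'a set" where
  "reg_normal Q zb = {\<eta>. zb \<in> Q \<and>
     (\<forall>\<epsilon>>0. \<exists>\<delta>>0. \<forall>z\<in>Q. norm (z - zb) < \<delta> \<longrightarrow> \<eta> \<bullet> (z - zb) \<le> \<epsilon> * norm (z - zb))}"

definition lim_normal :: "'a::euclidean_space set \<Rightarrow> 'a \<Rightarrow> 'a set" where
  "lim_normal Q zb = {\<eta>. zb \<in> Q \<and> (\<exists>z e. (\<forall>k. z k \<in> Q \<and> e k \<in> reg_normal Q (z k))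
       \<and> z \<longlonglongrightarrow> zb \<and> e \<longlonglongrightarrow> \<eta>)}"

definition dir_normal :: "'a::euclidean_space set \<Rightarrow> 'a \<Rightarrow> 'a \<Rightarrow> 'a set" where
  "dir_normal Q zb w = {\<eta>. \<exists>ws t e. ws \<longlonglongrightarrow> w \<and> (\<forall>k. t k > 0) \<and> t \<longlonglongrightarrow> 0
       \<and> e \<longlonglongrightarrow> \<eta> \<and> (\<forall>k. e k \<in> reg_normal Q (zb + t k *\<^sub>R ws k))}"

definition tangent_cone :: "'a::euclidean_space set \<Rightarrow> 'a \<Rightarrow> 'a set" where
  "tangent_cone Q zb = {d. \<exists>t ds. (\<forall>k. t k > 0) \<and> t \<longlonglongrightarrow> 0 \<and> ds \<longlonglongrightarrow> d
       \<and> (\<forall>k. zb + t k *\<^sub>R ds k \<in> Q)}"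

definition gph :: "('a \<Rightarrow> 'b set) \<Rightarrow> ('a \<times> 'b) set" where
  "gph \<Psi> = {(x, y). y \<in> \<Psi> x}"

definition reg_coderiv :: "('a::euclidean_space \<Rightarrow> 'b::euclidean_space set) \<Rightarrow> 'a \<Rightarrow> 'b \<Rightarrow> 'b \<Rightarrow> 'a set" where
  "reg_coderiv \<Psi> x y ys = {xs. (xs, - ys) \<in> reg_normal (gph \<Psi>) (x, y)}"

definition lim_coderiv :: "('a::euclidean_space \<Rightarrow> 'b::euclidean_space set) \<Rightarrow> 'a \<Rightarrow> 'b \<Rightarrow> 'b \<Rightarrow> 'a set" where
  "lim_coderiv \<Psi> x y ys = {xs. (xs, - ys) \<in> lim_normal (gph \<Psi>) (x, y)}"

definition dir_coderiv :: "('a::euclidean_space \<Rightarrow> 'b::euclidean_space set) \<Rightarrow> 'a \<Rightarrow> 'b \<Rightarrow> 'a \<Rightarrow> 'b \<Rightarrow> 'b \<Rightarrow> 'a set" where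
  "dir_coderiv \<Psi> x y u v ys = {xs. (xs, - ys) \<in> dir_normal (gph \<Psi>) (x, y) (u, v)}"

text \<open>Single-valued versions, via the map x \<mapsto> {g x}.\<close>
definition sv :: "('a \<Rightarrow> 'b) \<Rightarrow> 'a \<Rightarrow> 'b set" where
  "sv g = (\<lambda>x. {g x})"

definition graph_deriv :: "('a::euclidean_space \<Rightarrow> 'b::euclidean_space) \<Rightarrow> 'a \<Rightarrow> 'a \<Rightarrow> 'b set" where
  "graph_deriv g x u = {w. (u, w) \<in> tangent_cone (gph (sv g)) (x, g x)}"

definition calm_at :: "('a::real_normed_vector \<Rightarrow> 'b::real_normed_vector) \<Rightarrow> 'a \<Rightarrow> bool" where
  "calm_at g x \<longleftrightarrow> (\<exists>U L. open U \<and> x \<in> U \<and> L > 0 \<and> (\<forall>x'\<in>U. norm (g x' - g x) \<le> L * norm (x' - x)))"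

end

theory Submission
  imports Defs
begin

lemma gph_Phi_iff:
  fixes g :: "'a \<Rightarrow> 'b::ab_group_add"
  assumes "\<And>x. \<Phi> x = (\<lambda>d. g x - d) ` D"
  shows "(a, b) \<in> gph \<Phi> \<longleftrightarrow> g a - b \<in> D"
proof -
  have "b \<in> (\<lambda>d. g a - d) ` D \<longleftrightarrow> g a - b \<in> D"
  proof
    assume "b \<in> (\<lambda>d. g a - d) ` D"
    then obtain d where "d \<in> D" "b = g a - d" by blast
    then show "g a - b \<in> D" by simp
  next
    assume "g a - b \<in> D"
    then show "b \<in> (\<lambda>d. g a - d) ` D" by (rule image_eqI[rotated]) simp
  qed
  then show ?thesis by (simp add: gph_def assms)
qed

lemma gph_sv_iff: "(a, b) \<in> gph (sv g) \<longleftrightarrow> b = g a"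
  by (simp add: gph_def sv_def)

lemma fwd:
  fixes g :: "'a::euclidean_space \<Rightarrow> 'b::euclidean_space"
  assumes Phi: "\<And>x. \<Phi> x = (\<lambda>d. g x - d) ` D"
    and e: "(e1, e2) \<in> reg_normal (gph \<Phi>) (p, q)"
  shows "- e2 \<in> reg_normal D (g p - q) \<and> (e1, e2) \<in> reg_normal (gph (sv g)) (p, g p)"
proof -
  have G: "\<And>a b. (a,b) \<in> gph \<Phi> \<longleftrightarrow> g a - b \<in> D" using gph_Phi_iff[of \<Phi> g D] Phi by blast
  have pq: "g p - q \<in> D" using e G by (simp add: reg_normal_def)
  have H: "\<forall>\<epsilon>>0. \<exists>\<delta>>0. \<forall>z\<in>gph \<Phi>. norm (z - (p,q)) < \<delta> \<longrightarrow> (e1,e2) \<bullet> (z - (p,q)) \<le> \<epsilon> * norm (z - (p,q))"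
    using e by (simp add: reg_normal_def)
  have A: "- e2 \<in> reg_normal D (g p - q)"
    unfolding reg_normal_def
  proof (intro CollectI conjI pq allI impI)
    fix \<epsilon> :: real assume "\<epsilon> > 0"
    then obtain \<delta> where d: "\<delta> > 0" and hd: "\<forall>z\<in>gph \<Phi>. norm (z - (p,q)) < \<delta> \<longrightarrow> (e1,e2) \<bullet> (z - (p,q)) \<le> \<epsilon> * norm (z - (p,q))"
      using H by blast
    show "\<exists>\<delta>>0. \<forall>z\<in>D. norm (z - (g p - q)) < \<delta> \<longrightarrow> - e2 \<bullet> (z - (g p - q)) \<le> \<epsilon> * norm (z - (g p - q))"
    proof (intro exI[of _ \<delta>] conjI d ballI impI)
      fix z assume z: "z \<in> D" "norm (z - (g p - q)) < \<delta>"
      have m: "(p, g p - z) \<in> gph \<Phi>" using z G by simp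
      have eq: "(p, g p - z) - (p, q) = (0, - (z - (g p - q)))" by (simp add: algebra_simps)
      have n: "norm ((p, g p - z) - (p,q)) = norm (z - (g p - q))"
        unfolding eq by (simp add: norm_minus_commute)
      have i: "(e1,e2) \<bullet> ((p, g p - z) - (p,q)) = - e2 \<bullet> (z - (g p - q))"
        unfolding eq by (simp add: inner_diff_right)
      show "- e2 \<bullet> (z - (g p - q)) \<le> \<epsilon> * norm (z - (g p - q))"
        using hd[rule_format, OF m] z(2) unfolding n i by blast
    qed
  qed
  have B: "(e1, e2) \<in> reg_normal (gph (sv g)) (p, g p)"
    unfolding reg_normal_def
  proof (intro CollectI conjI allI impI)
    show "(p, g p) \<in> gph (sv g)" by (simp add: gph_sv_iff)
    fix \<epsilon> :: real assume "\<epsilon> > 0"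
    then obtain \<delta> where d: "\<delta> > 0" and hd: "\<forall>z\<in>gph \<Phi>. norm (z - (p,q)) < \<delta> \<longrightarrow> (e1,e2) \<bullet> (z - (p,q)) \<le> \<epsilon> * norm (z - (p,q))"
      using H by blast
    show "\<exists>\<delta>>0. \<forall>z\<in>gph (sv g). norm (z - (p, g p)) < \<delta> \<longrightarrow> (e1,e2) \<bullet> (z - (p, g p)) \<le> \<epsilon> * norm (z - (p, g p))"
    proof (intro exI[of _ \<delta>] conjI d ballI impI)
      fix z assume z: "z \<in> gph (sv g)" "norm (z - (p, g p)) < \<delta>"
      obtain a b where ab: "z = (a, b)" by fastforce
      have b: "b = g a" using z ab gph_sv_iff by metis
      have m: "(a, g a - (g p - q)) \<in> gph \<Phi>" using pq G by simp
      have eq: "(a, g a - (g p - q)) - (p, q) = z - (p, g p)" using ab b by (simp add: algebra_simps)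
      show "(e1,e2) \<bullet> (z - (p, g p)) \<le> \<epsilon> * norm (z - (p, g p))"
        using hd[rule_format, OF m] z(2) unfolding eq by blast
    qed
  qed
  show ?thesis using A B by (rule conjI)
qed


lemma bwd:
  fixes g :: "'a::euclidean_space \<Rightarrow> 'b::euclidean_space"
  assumes Phi: "\<And>x. \<Phi> x = (\<lambda>d. g x - d) ` D"
    and calm: "calm_at g x"
    and xy: "(x, y) \<in> gph \<Phi>"
    and yD: "ys \<in> reg_normal D (g x - y)"
    and xg: "(xs, - ys) \<in> reg_normal (gph (sv g)) (x, g x)"
  shows "(xs, - ys) \<in> reg_normal (gph \<Phi>) (x, y)"
proof -
  have G: "\<And>a b. (a,b) \<in> gph \<Phi> \<longleftrightarrow> g a - b \<in> D" using gph_Phi_iff[of \<Phi> g D] Phi by blast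
  obtain U L where U: "open U" "x \<in> U" "L > 0" and UL: "\<forall>x'\<in>U. norm (g x' - g x) \<le> L * norm (x' - x)"
    using calm unfolding calm_at_def by blast
  obtain r where r: "r > 0" "ball x r \<subseteq> U" using U open_contains_ball by blast
  have HD: "\<forall>\<epsilon>>0. \<exists>\<delta>>0. \<forall>z\<in>D. norm (z - (g x - y)) < \<delta> \<longrightarrow> ys \<bullet> (z - (g x - y)) \<le> \<epsilon> * norm (z - (g x - y))"
    using yD by (simp add: reg_normal_def)
  have HG: "\<forall>\<epsilon>>0. \<exists>\<delta>>0. \<forall>z\<in>gph (sv g). norm (z - (x, g x)) < \<delta> \<longrightarrow> (xs, - ys) \<bullet> (z - (x, g x)) \<le> \<epsilon> * norm (z - (x, g x))"
    using xg by (simp add: reg_normal_def)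
  show ?thesis
    unfolding reg_normal_def
  proof (intro CollectI conjI xy allI impI)
    fix \<epsilon> :: real assume ep: "\<epsilon> > 0"
    define c where "c = \<epsilon> / (2 * (1 + L))"
    have c: "c > 0" using ep U(3) by (simp add: c_def)
    have c2: "2 * c * (1 + L) = \<epsilon>" using U(3) by (simp add: c_def field_simps)
    obtain d1 where d1: "d1 > 0" and h1: "\<forall>z\<in>D. norm (z - (g x - y)) < d1 \<longrightarrow> ys \<bullet> (z - (g x - y)) \<le> c * norm (z - (g x - y))"
      using HD c by blast
    obtain d2 where d2: "d2 > 0" and h2: "\<forall>z\<in>gph (sv g). norm (z - (x, g x)) < d2 \<longrightarrow> (xs, - ys) \<bullet> (z - (x, g x)) \<le> c * norm (z - (x, g x))"
      using HG c by blast
    define \<delta> where "\<delta> = min r (min (d1 / (1 + L)) (d2 / (1 + L)))"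
    have dpos: "\<delta> > 0" using r d1 d2 U(3) by (simp add: \<delta>_def)
    show "\<exists>\<delta>>0. \<forall>z\<in>gph \<Phi>. norm (z - (x, y)) < \<delta> \<longrightarrow> (xs, - ys) \<bullet> (z - (x, y)) \<le> \<epsilon> * norm (z - (x, y))"
    proof (intro exI[of _ \<delta>] conjI dpos ballI impI)
      fix z assume z: "z \<in> gph \<Phi>" "norm (z - (x, y)) < \<delta>"
      obtain a b where ab: "z = (a, b)" by fastforce
      define N where "N = norm (z - (x, y))"
      have zN: "z - (x, y) = (a - x, b - y)" using ab by simp
      have na: "norm (a - x) \<le> N" unfolding N_def zN by (rule norm_fst_le)
      have nb: "norm (b - y) \<le> N" unfolding N_def zN by (rule norm_snd_le)
      have Nd: "N < \<delta>" using z(2) by (simp add: N_def)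
      have "a \<in> ball x r" using na Nd by (simp add: dist_norm norm_minus_commute \<delta>_def)
      then have "a \<in> U" using r by blast
      then have ga: "norm (g a - g x) \<le> L * norm (a - x)" using UL by blast
      have dD: "g a - b \<in> D" using z(1) ab G by simp
      have L1: "(1 + L) * N < d1" and L2: "(1 + L) * N < d2"
      proof -
        have "N < d1 / (1 + L)" "N < d2 / (1 + L)" using Nd by (auto simp: \<delta>_def)
        then show "(1 + L) * N < d1" "(1 + L) * N < d2" using U(3) by (simp_all add: field_simps)
      qed
      have P1: "norm ((a, g a) - (x, g x)) \<le> (1 + L) * N"
      proof -
        have "norm ((a, g a) - (x, g x)) = norm (a - x, g a - g x)" by simp
        also have "\<dots> \<le> norm (a - x) + norm (g a - g x)" by (rule norm_Pair_le)
        also have "\<dots> \<le> N + L * N" using na ga U(3) mult_left_mono[OF na, of L] by linarith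
        finally show ?thesis by (simp add: algebra_simps)
      qed
      have P2: "norm ((g a - b) - (g x - y)) \<le> (1 + L) * N"
      proof -
        have "(g a - b) - (g x - y) = (g a - g x) - (b - y)" by (simp add: algebra_simps)
        then have "norm ((g a - b) - (g x - y)) \<le> norm (g a - g x) + norm (b - y)"
          by (metis norm_triangle_ineq4)
        also have "\<dots> \<le> L * N + N" using nb ga U(3) mult_left_mono[OF na, of L] by linarith
        finally show ?thesis by (simp add: algebra_simps)
      qed
      have I1: "(xs, - ys) \<bullet> ((a, g a) - (x, g x)) \<le> c * ((1 + L) * N)"
      proof -
        have m: "(a, g a) \<in> gph (sv g)" by (simp add: gph_sv_iff)
        have "(xs, - ys) \<bullet> ((a, g a) - (x, g x)) \<le> c * norm ((a, g a) - (x, g x))"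
          using h2 m P1 L2 by auto
        also have "\<dots> \<le> c * ((1 + L) * N)" using P1 c by (simp add: mult_left_mono)
        finally show ?thesis .
      qed
      have I2: "ys \<bullet> ((g a - b) - (g x - y)) \<le> c * ((1 + L) * N)"
      proof -
        have "ys \<bullet> ((g a - b) - (g x - y)) \<le> c * norm ((g a - b) - (g x - y))"
          using h1 dD P2 L1 by auto
        also have "\<dots> \<le> c * ((1 + L) * N)" using P2 c by (simp add: mult_left_mono)
        finally show ?thesis .
      qed
      have idt: "(xs, - ys) \<bullet> (z - (x, y)) = (xs, - ys) \<bullet> ((a, g a) - (x, g x)) + ys \<bullet> ((g a - b) - (g x - y))"
        unfolding zN by (simp add: inner_diff_right algebra_simps)
      have "(xs, - ys) \<bullet> (z - (x, y)) \<le> 2 * c * (1 + L) * N" using idt I1 I2 by simp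
      then show "(xs, - ys) \<bullet> (z - (x, y)) \<le> \<epsilon> * norm (z - (x, y))"
        using c2 by (simp add: N_def)
    qed
  qed
qed


lemma limpart:
  fixes g :: "'a::euclidean_space \<Rightarrow> 'b::euclidean_space"
  assumes Phi: "\<And>x. \<Phi> x = (\<lambda>d. g x - d) ` D"
    and cont: "continuous_on UNIV g"
    and H: "(xs, - ys) \<in> lim_normal (gph \<Phi>) (x, y)"
  shows "ys \<in> lim_normal D (g x - y) \<and> (xs, - ys) \<in> lim_normal (gph (sv g)) (x, g x)"
proof -
  have G: "\<And>a b. (a,b) \<in> gph \<Phi> \<longleftrightarrow> g a - b \<in> D" using gph_Phi_iff[of \<Phi> g D] Phi by blast
  obtain z e where xy: "(x, y) \<in> gph \<Phi>" and ze: "\<forall>k. z k \<in> gph \<Phi> \<and> e k \<in> reg_normal (gph \<Phi>) (z k)"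
    and zl: "z \<longlonglongrightarrow> (x, y)" and el: "e \<longlonglongrightarrow> (xs, - ys)"
    using H unfolding lim_normal_def by blast
  define p where "p k = fst (z k)" for k
  define q where "q k = snd (z k)" for k
  define e1 where "e1 k = fst (e k)" for k
  define e2 where "e2 k = snd (e k)" for k
  have F: "- e2 k \<in> reg_normal D (g (p k) - q k) \<and> (e1 k, e2 k) \<in> reg_normal (gph (sv g)) (p k, g (p k))" for k
  proof -
    have "(e1 k, e2 k) \<in> reg_normal (gph \<Phi>) (p k, q k)" using ze by (simp add: p_def q_def e1_def e2_def)
    then show ?thesis by (rule fwd[OF Phi])
  qed
  have pl: "p \<longlonglongrightarrow> x" unfolding p_def using tendsto_fst[OF zl] by simp
  have ql: "q \<longlonglongrightarrow> y" unfolding q_def using tendsto_snd[OF zl] by simp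
  have ic: "isCont g x" using cont by (simp add: continuous_on_eq_continuous_at)
  have gl: "(\<lambda>k. g (p k)) \<longlonglongrightarrow> g x" by (rule isCont_tendsto_compose[OF ic pl])
  have dl: "(\<lambda>k. g (p k) - q k) \<longlonglongrightarrow> g x - y" by (intro tendsto_diff gl ql)
  have e2l: "(\<lambda>k. - e2 k) \<longlonglongrightarrow> ys" unfolding e2_def using tendsto_minus[OF tendsto_snd[OF el]] by simp
  have pgl: "(\<lambda>k. (p k, g (p k))) \<longlonglongrightarrow> (x, g x)" by (intro tendsto_Pair pl gl)
  have eeq: "(\<lambda>k. (e1 k, e2 k)) = e" by (simp add: e1_def e2_def)
  have dD: "g (p k) - q k \<in> D" for k using ze G[of "fst (z k)" "snd (z k)"] by (simp add: p_def q_def)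
  have A: "ys \<in> lim_normal D (g x - y)"
    unfolding lim_normal_def
    apply (rule CollectI, rule conjI)
    subgoal using xy G by simp
    apply (rule exI[of _ "\<lambda>k. g (p k) - q k"], rule exI[of _ "\<lambda>k. - e2 k"])
    using dD F dl e2l by blast
  have B: "(xs, - ys) \<in> lim_normal (gph (sv g)) (x, g x)"
    unfolding lim_normal_def
    apply (rule CollectI, rule conjI)
    subgoal by (simp add: gph_sv_iff)
    apply (rule exI[of _ "\<lambda>k. (p k, g (p k))"], rule exI[of _ "\<lambda>k. (e1 k, e2 k)"])
    using F pgl el eeq by (simp add: gph_sv_iff)
  show ?thesis using A B by (rule conjI)
qed


lemma dirpart:
  fixes g :: "'a::euclidean_space \<Rightarrow> 'b::euclidean_space"
  assumes Phi: "\<And>x. \<Phi> x = (\<lambda>d. g x - d) ` D"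
    and calm: "calm_at g x"
    and H: "(xs, - ys) \<in> dir_normal (gph \<Phi>) (x, y) (u, v)"
  shows "\<exists>w. w \<in> graph_deriv g x u \<and> ys \<in> dir_normal D (g x - y) (w - v)
            \<and> (xs, - ys) \<in> dir_normal (gph (sv g)) (x, g x) (u, w)"
proof -
  obtain ws t e where wsl: "ws \<longlonglongrightarrow> (u, v)" and tp: "\<forall>k. t k > 0" and tl: "t \<longlonglongrightarrow> 0"
    and el: "e \<longlonglongrightarrow> (xs, - ys)" and er: "\<forall>k. e k \<in> reg_normal (gph \<Phi>) ((x, y) + t k *\<^sub>R ws k)"
    using H unfolding dir_normal_def by blast
  obtain U L where U: "open U" "x \<in> U" "L > 0" and UL: "\<forall>x'\<in>U. norm (g x' - g x) \<le> L * norm (x' - x)"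
    using calm unfolding calm_at_def by blast
  define uk where "uk k = fst (ws k)" for k
  define vk where "vk k = snd (ws k)" for k
  define pk where "pk k = x + t k *\<^sub>R uk k" for k
  define wk where "wk k = (g (pk k) - g x) /\<^sub>R t k" for k
  have ul: "uk \<longlonglongrightarrow> u" unfolding uk_def using tendsto_fst[OF wsl] by simp
  have vl: "vk \<longlonglongrightarrow> v" unfolding vk_def using tendsto_snd[OF wsl] by simp
  have tw: "t k *\<^sub>R wk k = g (pk k) - g x" for k using tp[rule_format, of k] by (simp add: wk_def)
  have F: "- snd (e k) \<in> reg_normal D (g (pk k) - (y + t k *\<^sub>R vk k))
      \<and> (fst (e k), snd (e k)) \<in> reg_normal (gph (sv g)) (pk k, g (pk k))" for k
  proof -
    have "(fst (e k), snd (e k)) \<in> reg_normal (gph \<Phi>) (pk k, y + t k *\<^sub>R vk k)"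
    proof -
      have eqp: "(x, y) + t k *\<^sub>R ws k = (pk k, y + t k *\<^sub>R vk k)"
        by (simp add: prod_eq_iff pk_def uk_def vk_def)
      show ?thesis using er[rule_format, of k] unfolding eqp by simp
    qed
    then show ?thesis by (rule fwd[OF Phi])
  qed
  have pl: "pk \<longlonglongrightarrow> x"
  proof -
    have "(\<lambda>k. x + t k *\<^sub>R uk k) \<longlonglongrightarrow> x + 0 *\<^sub>R u" by (intro tendsto_intros tl ul)
    then show ?thesis by (simp add: pk_def[abs_def])
  qed
  have "eventually (\<lambda>k. pk k \<in> U) sequentially"
    using topological_tendstoD[OF pl U(1) U(2)] .
  then obtain N where N: "\<And>k. k \<ge> N \<Longrightarrow> pk k \<in> U" by (auto simp: eventually_sequentially)
  obtain K where K: "K > 0" "\<And>k. norm (uk k) \<le> K"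
    using convergent_imp_Bseq[OF convergentI[OF ul]] unfolding Bseq_def by blast
  have wb: "norm (wk k) \<le> L * K" if "k \<ge> N" for k
  proof -
    have tk: "t k > 0" using tp by blast
    have "t k * norm (wk k) = norm (g (pk k) - g x)" using tw[of k] tk by (metis abs_of_pos norm_scaleR)
    also have "\<dots> \<le> L * norm (pk k - x)" using UL N[OF that] by blast
    also have "\<dots> = L * (t k * norm (uk k))" using tk by (simp add: pk_def)
    also have "\<dots> \<le> t k * (L * K)"
    proof -
      have "t k * norm (uk k) \<le> t k * K" using K(2)[of k] tk by (simp add: mult_left_mono)
      then show ?thesis using U(3) by (simp add: mult_left_mono mult.left_commute)
    qed
    finally show ?thesis using tk by (metis mult_le_cancel_left_pos)
  qed
  have "bounded (range (\<lambda>k. wk (k + N)))"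
    unfolding bounded_iff using wb by (intro exI[of _ "L * K"]) auto
  then obtain w r0 where r0: "strict_mono r0" and wl0: "((\<lambda>k. wk (k + N)) \<circ> r0) \<longlonglongrightarrow> w"
    using bounded_imp_convergent_subsequence by blast
  define s where "s k = r0 k + N" for k
  have s: "strict_mono s" using r0 unfolding s_def strict_mono_def by simp
  have wl: "(wk \<circ> s) \<longlonglongrightarrow> w" using wl0 by (simp add: s_def o_def)
  have sub: "\<And>X l. X \<longlonglongrightarrow> l \<Longrightarrow> (\<lambda>k. X (s k)) \<longlonglongrightarrow> l"
    using LIMSEQ_subseq_LIMSEQ[OF _ s] by (simp add: o_def)
  have wl': "(\<lambda>k. wk (s k)) \<longlonglongrightarrow> w" using wl by (simp add: o_def)
  have dsl: "(\<lambda>k. (uk (s k), wk (s k))) \<longlonglongrightarrow> (u, w)" by (intro tendsto_Pair sub[OF ul] wl')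
  have pt: "(x, g x) + t (s k) *\<^sub>R (uk (s k), wk (s k)) = (pk (s k), g (pk (s k)))" for k
    using tw[of "s k"] by (simp add: pk_def)
  have tsl: "(\<lambda>k. t (s k)) \<longlonglongrightarrow> 0" by (rule sub[OF tl])
  have A: "w \<in> graph_deriv g x u"
    unfolding graph_deriv_def tangent_cone_def
    apply (rule CollectI, rule CollectI)
    apply (rule exI[of _ "\<lambda>k. t (s k)"], rule exI[of _ "\<lambda>k. (uk (s k), wk (s k))"])
    using tp tsl dsl pt by (simp add: gph_sv_iff)
  have dpt: "(g x - y) + t (s k) *\<^sub>R (wk (s k) - vk (s k)) = g (pk (s k)) - (y + t (s k) *\<^sub>R vk (s k))" for k
    using tw[of "s k"] by (simp add: scaleR_diff_right algebra_simps)
  have dpt': "- snd (e (s k)) \<in> reg_normal D ((g x - y) + t (s k) *\<^sub>R (wk (s k) - vk (s k)))" for k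
    unfolding dpt using F by blast
  have e2l: "(\<lambda>k. - snd (e (s k))) \<longlonglongrightarrow> ys"
    using tendsto_minus[OF tendsto_snd[OF sub[OF el]]] by simp
  have B: "ys \<in> dir_normal D (g x - y) (w - v)"
    unfolding dir_normal_def
    apply (rule CollectI)
    apply (rule exI[of _ "\<lambda>k. wk (s k) - vk (s k)"], rule exI[of _ "\<lambda>k. t (s k)"], rule exI[of _ "\<lambda>k. - snd (e (s k))"])
    using tendsto_diff[OF wl' sub[OF vl]] tp tsl e2l dpt' by blast
  have C: "(xs, - ys) \<in> dir_normal (gph (sv g)) (x, g x) (u, w)"
    unfolding dir_normal_def
    apply (rule CollectI)
    apply (rule exI[of _ "\<lambda>k. (uk (s k), wk (s k))"], rule exI[of _ "\<lambda>k. t (s k)"], rule exI[of _ "\<lambda>k. e (s k)"])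
    using dsl tp tsl sub[OF el] F pt by simp
  show ?thesis using A B C by blast
qed


theorem mainTheorem1:
  fixes g :: "'a::euclidean_space \<Rightarrow> 'b::euclidean_space"
    and D :: "'b set" and \<Phi> :: "'a \<Rightarrow> 'b set" and x :: 'a and y :: 'b
  assumes "continuous_on UNIV g"
    and "D \<noteq> {}" and "closed D"
    and "\<And>x. \<Phi> x = (\<lambda>d. g x - d) ` D"
    and "(x, y) \<in> gph \<Phi>"
  shows "(\<forall>ys. reg_coderiv \<Phi> x y ys \<subseteq>
              (if ys \<in> reg_normal D (g x - y) then reg_coderiv (sv g) x (g x) ys else {}))
       \<and> (calm_at g x \<longrightarrow> (\<forall>ys.
              (if ys \<in> reg_normal D (g x - y) then reg_coderiv (sv g) x (g x) ys else {})
                \<subseteq> reg_coderiv \<Phi> x y ys))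
       \<and> (\<forall>ys. lim_coderiv \<Phi> x y ys \<subseteq>
              (if ys \<in> lim_normal D (g x - y) then lim_coderiv (sv g) x (g x) ys else {}))
       \<and> (calm_at g x \<longrightarrow> (\<forall>u v ys. dir_coderiv \<Phi> x y u v ys \<subseteq>
              (\<Union>w \<in> {w. w \<in> graph_deriv g x u \<and> ys \<in> dir_normal D (g x - y) (w - v)}.
                  dir_coderiv (sv g) x (g x) u w ys)))"
proof (intro conjI allI impI subsetI)
  note Phi = assms(4)
  fix ys xs assume "xs \<in> reg_coderiv \<Phi> x y ys"
  then have "(xs, - ys) \<in> reg_normal (gph \<Phi>) (x, y)" by (simp add: reg_coderiv_def)
  from fwd[OF Phi this] show "xs \<in> (if ys \<in> reg_normal D (g x - y) then reg_coderiv (sv g) x (g x) ys else {})"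
    by (simp add: reg_coderiv_def)
next
  note Phi = assms(4)
  fix ys xs assume calm: "calm_at g x"
    and xs: "xs \<in> (if ys \<in> reg_normal D (g x - y) then reg_coderiv (sv g) x (g x) ys else {})"
  then have yD: "ys \<in> reg_normal D (g x - y)" by (simp split: if_splits)
  with xs have "(xs, - ys) \<in> reg_normal (gph (sv g)) (x, g x)" by (simp add: reg_coderiv_def)
  from bwd[OF Phi calm assms(5) yD this] show "xs \<in> reg_coderiv \<Phi> x y ys"
    by (simp add: reg_coderiv_def)
next
  note Phi = assms(4)
  fix ys xs assume "xs \<in> lim_coderiv \<Phi> x y ys"
  then have "(xs, - ys) \<in> lim_normal (gph \<Phi>) (x, y)" by (simp add: lim_coderiv_def)
  from limpart[OF Phi assms(1) this] show "xs \<in> (if ys \<in> lim_normal D (g x - y) then lim_coderiv (sv g) x (g x) ys else {})"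
    by (simp add: lim_coderiv_def)
next
  note Phi = assms(4)
  fix u v ys xs assume calm: "calm_at g x" and "xs \<in> dir_coderiv \<Phi> x y u v ys"
  then have "(xs, - ys) \<in> dir_normal (gph \<Phi>) (x, y) (u, v)" by (simp add: dir_coderiv_def)
  from dirpart[OF Phi calm this] obtain w where "w \<in> graph_deriv g x u" "ys \<in> dir_normal D (g x - y) (w - v)"
    "(xs, - ys) \<in> dir_normal (gph (sv g)) (x, g x) (u, w)" by blast
  then show "xs \<in> (\<Union>w \<in> {w. w \<in> graph_deriv g x u \<and> ys \<in> dir_normal D (g x - y) (w - v)}.
                  dir_coderiv (sv g) x (g x) u w ys)"
    by (auto simp: dir_coderiv_def)
qed

end
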